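(* Let $G$ be a stacked $4$-polytopal graph. If $G$ has an induced subgraph isomorphic to $G_3\star G_6$ for some graph $G_3$ on $3$ vertices and some graph $G_6$ on $6$ vertices, then $G$ has an induced subgraph isomorphic to $K_3\star P_6$.
   Context: A stacked $4$-polytopal graph is the $1$-skeleton of a stacked $4$-polytope, i.e. of a simplicial $4$-polytope obtained from a $4$-simplex by repeatedly gluing a new $4$-simplex onto a facet. $K_3$ is the triangle, $P_6$ the path on $6$ vertices, $\star$ the graph join. *)

theory Defs
  imports Main
begin

definition simple_graph :: "'a set \<Rightarrow> ('a \<Rightarrow> 'a \<Rightarrow> bool) \<Rightarrow> bool" where
  "simple_graph V E \<longleftrightarrow> finite V \<and> (\<forall>x y. E x y \<longrightarrow> E y x) \<and> (\<forall>x. \<not> E x x)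
     \<and> (\<forall>x y. E x y \<longrightarrow> x \<in> V \<and> y \<in> V)"

text \<open>Stacked 4-polytopes, tracked combinatorially by (vertices, graph, facets):
start with the 4-simplex (5 vertices, all 4-subsets as facets); stacking a new
4-simplex on facet F adds a new vertex v adjacent to the 4 vertices of F, removes
the facet F and adds the 4 facets (F - {u}) + {v}.\<close>

inductive stacked4 :: "'a set \<Rightarrow> ('a \<Rightarrow> 'a \<Rightarrow> bool) \<Rightarrow> 'a set set \<Rightarrow> bool" where
  simplex: "finite S \<Longrightarrow> card S = 5 \<Longrightarrow>
     stacked4 S (\<lambda>x y. x \<in> S \<and> y \<in> S \<and> x \<noteq> y) {F. F \<subseteq> S \<and> card F = 4}"
| stack: "stacked4 V E Fs \<Longrightarrow> F \<in> Fs \<Longrightarrow> v \<notin> V \<Longrightarrow>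
     stacked4 (insert v V) (\<lambda>x y. E x y \<or> (x = v \<and> y \<in> F) \<or> (y = v \<and> x \<in> F))
       ((Fs - {F}) \<union> {insert v (F - {u}) | u. u \<in> F})"

definition stacked4_graph :: "'a set \<Rightarrow> ('a \<Rightarrow> 'a \<Rightarrow> bool) \<Rightarrow> bool" where
  "stacked4_graph V E \<longleftrightarrow> (\<exists>Fs. stacked4 V E Fs)"

definition has_induced :: "'a set \<Rightarrow> ('a \<Rightarrow> 'a \<Rightarrow> bool) \<Rightarrow> 'b set \<Rightarrow> ('b \<Rightarrow> 'b \<Rightarrow> bool) \<Rightarrow> bool" where
  "has_induced V E W H \<longleftrightarrow> (\<exists>f. inj_on f W \<and> f ` W \<subseteq> V \<and>
      (\<forall>x\<in>W. \<forall>y\<in>W. H x y \<longleftrightarrow> E (f x) (f y)))"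

definition join_V :: "'a set \<Rightarrow> 'b set \<Rightarrow> ('a + 'b) set" where
  "join_V V1 V2 = Inl ` V1 \<union> Inr ` V2"

fun join_E :: "'a set \<Rightarrow> ('a \<Rightarrow> 'a \<Rightarrow> bool) \<Rightarrow> 'b set \<Rightarrow> ('b \<Rightarrow> 'b \<Rightarrow> bool)
    \<Rightarrow> 'a + 'b \<Rightarrow> 'a + 'b \<Rightarrow> bool" where
  "join_E V1 E1 V2 E2 (Inl x) (Inl y) = E1 x y"
| "join_E V1 E1 V2 E2 (Inr x) (Inr y) = E2 x y"
| "join_E V1 E1 V2 E2 (Inl x) (Inr y) = (x \<in> V1 \<and> y \<in> V2)"
| "join_E V1 E1 V2 E2 (Inr x) (Inl y) = (x \<in> V2 \<and> y \<in> V1)"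

definition K3_V :: "nat set" where "K3_V = {0, 1, 2}"
definition K3_E :: "nat \<Rightarrow> nat \<Rightarrow> bool" where
  "K3_E x y \<longleftrightarrow> x \<in> K3_V \<and> y \<in> K3_V \<and> x \<noteq> y"

definition P6_V :: "nat set" where "P6_V = {0..<6}"
definition P6_E :: "nat \<Rightarrow> nat \<Rightarrow> bool" where
  "P6_E x y \<longleftrightarrow> x \<in> P6_V \<and> y \<in> P6_V \<and> (y = x + 1 \<or> x = y + 1)"

end

theory Submission
  imports Defs
begin


definition clq :: "('a \<Rightarrow> 'a \<Rightarrow> bool) \<Rightarrow> 'a set \<Rightarrow> bool" where
  "clq E S \<longleftrightarrow> (\<forall>x\<in>S. \<forall>y\<in>S. x \<noteq> y \<longrightarrow> E x y)"

definition NB :: "('a \<Rightarrow> 'a \<Rightarrow> bool) \<Rightarrow> 'a set \<Rightarrow> 'a set" where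
  "NB E T = {x. \<forall>t\<in>T. E x t}"

definition prep :: "('a \<Rightarrow> 'a \<Rightarrow> bool) \<Rightarrow> 'a list \<Rightarrow> bool" where
  "prep E xs \<longleftrightarrow> distinct xs \<and> (\<forall>i<length xs. \<forall>j<length xs.
      E (xs!i) (xs!j) \<longleftrightarrow> (j = Suc i \<or> i = Suc j))"

definition inv4 :: "'a set \<Rightarrow> ('a \<Rightarrow> 'a \<Rightarrow> bool) \<Rightarrow> 'a set set \<Rightarrow> bool" where
  "inv4 V E Fs \<longleftrightarrow> finite V \<and> (\<forall>x y. E x y \<longrightarrow> E y x) \<and> (\<forall>x. \<not> E x x)
    \<and> (\<forall>x y. E x y \<longrightarrow> x \<in> V \<and> y \<in> V)
    \<and> (\<forall>F\<in>Fs. F \<subseteq> V \<and> card F = 4 \<and> clq E F)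
    \<and> (\<forall>a b c d. E a c \<and> E c b \<and> E b d \<and> E d a \<and> a \<noteq> b \<and> c \<noteq> d \<longrightarrow> E a b \<or> E c d)
    \<and> (\<forall>T. T \<subseteq> V \<and> card T = 3 \<and> clq E T \<longrightarrow>
        (\<exists>xs. prep E xs \<and> 2 \<le> length xs \<and> set xs = NB E T \<and>
          (\<forall>F\<in>Fs. T \<subseteq> F \<longrightarrow> F = insert (hd xs) T \<or> F = insert (last xs) T)))"

lemma prep_rev:
  assumes "prep E xs" "\<forall>x y. E x y \<longrightarrow> E y x"
  shows "prep E (rev xs)"
  unfolding prep_def
proof (intro conjI allI impI)
  show "distinct (rev xs)" using assms by (simp add: prep_def)
  fix i j assume i: "i < length (rev xs)" and j: "j < length (rev xs)"
  have "E (rev xs ! i) (rev xs ! j) = E (xs ! (length xs - Suc i)) (xs ! (length xs - Suc j))"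
    using i j by (simp add: rev_nth)
  also have "\<dots> = (length xs - Suc j = Suc (length xs - Suc i) \<or> length xs - Suc i = Suc (length xs - Suc j))"
    using assms(1) i j unfolding prep_def by simp
  also have "\<dots> = (j = Suc i \<or> i = Suc j)" using i j by auto
  finally show "E (rev xs ! i) (rev xs ! j) = (j = Suc i \<or> i = Suc j)" .
qed

lemma prep_cons:
  assumes "prep E xs" "xs \<noteq> []" "v \<notin> set xs"
    and "\<forall>x\<in>set xs. E' v x \<longleftrightarrow> x = hd xs"
    and "\<forall>x\<in>set xs. E' x v \<longleftrightarrow> x = hd xs"
    and "\<not> E' v v"
    and "\<forall>x\<in>set xs. \<forall>y\<in>set xs. E' x y \<longleftrightarrow> E x y"
  shows "prep E' (v # xs)"
  unfolding prep_def
proof (intro conjI allI impI)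
  show "distinct (v # xs)" using assms by (simp add: prep_def)
  have d: "distinct xs" using assms by (simp add: prep_def)
  fix i j assume i: "i < length (v # xs)" and j: "j < length (v # xs)"
  show "E' ((v # xs) ! i) ((v # xs) ! j) = (j = Suc i \<or> i = Suc j)"
  proof (cases i)
    case 0
    then show ?thesis
    proof (cases j)
      case 0 then show ?thesis using \<open>i = 0\<close> assms by simp
    next
      case (Suc j')
      have "xs ! j' \<in> set xs" using j Suc by simp
      moreover have "xs ! j' = hd xs \<longleftrightarrow> j' = 0"
        using d j Suc assms(2) by (simp add: hd_conv_nth nth_eq_iff_index_eq)
      ultimately show ?thesis using \<open>i = 0\<close> Suc assms(4) by auto
    qed
  next
    case (Suc i')
    then show ?thesis
    proof (cases j)
      case 0
      have "xs ! i' \<in> set xs" using i Suc by simp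
      moreover have "xs ! i' = hd xs \<longleftrightarrow> i' = 0"
        using d i Suc assms(2) by (simp add: hd_conv_nth nth_eq_iff_index_eq)
      ultimately show ?thesis using \<open>j = 0\<close> Suc assms(5) by auto
    next
      case (Suc j')
      have "xs ! i' \<in> set xs" "xs ! j' \<in> set xs" using i j Suc \<open>i = Suc i'\<close> by auto
      then have "E' (xs ! i') (xs ! j') = E (xs ! i') (xs ! j')" using assms(7) by blast
      also have "\<dots> = (j' = Suc i' \<or> i' = Suc j')"
        using assms(1) i j Suc \<open>i = Suc i'\<close> unfolding prep_def by simp
      finally show ?thesis using Suc \<open>i = Suc i'\<close> by simp
    qed
  qed
qed

lemma prep_notri:
  assumes "prep E xs" "x \<in> set xs" "y \<in> set xs" "z \<in> set xs" "E x y" "E y z" "E x z"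
  shows False
proof -
  obtain i j k where "i < length xs" "j < length xs" "k < length xs"
    "x = xs!i" "y = xs!j" "z = xs!k" using assms by (metis in_set_conv_nth)
  then show False using assms unfolding prep_def by auto
qed

lemma inv_simplex:
  assumes "finite S" "card S = 5"
  shows "inv4 S (\<lambda>x y. x \<in> S \<and> y \<in> S \<and> x \<noteq> y) {F. F \<subseteq> S \<and> card F = 4}"
  unfolding inv4_def
proof (intro conjI allI impI ballI)
  fix T assume T: "T \<subseteq> S \<and> card T = 3 \<and> clq (\<lambda>x y. x \<in> S \<and> y \<in> S \<and> x \<noteq> y) T"
  have "card (S - T) = 2" using T assms card_Diff_subset[of T S] finite_subset[of T S] by simp
  then obtain c d where cd: "S - T = {c, d}" "c \<noteq> d" by (auto simp: card_2_iff)
  have Tne: "T \<noteq> {}" using T by auto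
  show "\<exists>xs. prep (\<lambda>x y. x \<in> S \<and> y \<in> S \<and> x \<noteq> y) xs \<and> 2 \<le> length xs \<and>
          set xs = NB (\<lambda>x y. x \<in> S \<and> y \<in> S \<and> x \<noteq> y) T \<and>
          (\<forall>F\<in>{F. F \<subseteq> S \<and> card F = 4}. T \<subseteq> F \<longrightarrow> F = insert (hd xs) T \<or> F = insert (last xs) T)"
  proof (intro exI[of _ "[c,d]"] conjI ballI impI)
    show "prep (\<lambda>x y. x \<in> S \<and> y \<in> S \<and> x \<noteq> y) [c, d]"
      using cd unfolding prep_def by (auto simp: less_Suc_eq nth_Cons')
    show "set [c, d] = NB (\<lambda>x y. x \<in> S \<and> y \<in> S \<and> x \<noteq> y) T"
    proof
      show "set [c, d] \<subseteq> NB (\<lambda>x y. x \<in> S \<and> y \<in> S \<and> x \<noteq> y) T"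
        using cd T unfolding NB_def by auto
      show "NB (\<lambda>x y. x \<in> S \<and> y \<in> S \<and> x \<noteq> y) T \<subseteq> set [c, d]"
        unfolding NB_def
      proof
        fix x assume "x \<in> {x. \<forall>t\<in>T. x \<in> S \<and> t \<in> S \<and> x \<noteq> t}"
        then have "x \<in> S - T" using Tne by auto
        then show "x \<in> set [c, d]" using cd by simp
      qed
    qed
    show "2 \<le> length [c, d]" by simp
    fix F assume F: "F \<in> {F. F \<subseteq> S \<and> card F = 4}" "T \<subseteq> F"
    have "card (F - T) = 1" using F T assms card_Diff_subset[of T F] finite_subset[of T S] by simp
    then obtain w where w: "F - T = {w}" by (rule card_1_singletonE)
    then have "w \<in> {c, d}" using F cd by blast
    moreover have "F = insert w T" using w F by blast
    ultimately show "F = insert (hd [c, d]) T \<or> F = insert (last [c, d]) T" by auto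
  qed
qed (use assms in \<open>auto simp: clq_def\<close>)

lemma prep_transfer:
  assumes "prep E xs" "\<forall>x\<in>set xs. \<forall>y\<in>set xs. E' x y = E x y"
  shows "prep E' xs"
  using assms unfolding prep_def by (metis nth_mem)

lemma inv_stack:
  assumes I: "inv4 V E Fs" and FF: "F \<in> Fs" and vV: "v \<notin> V"
  shows "inv4 (insert v V) (\<lambda>x y. E x y \<or> (x = v \<and> y \<in> F) \<or> (y = v \<and> x \<in> F))
           ((Fs - {F}) \<union> {insert v (F - {u}) | u. u \<in> F})"
proof -
  define E' where "E' = (\<lambda>x y. E x y \<or> (x = v \<and> y \<in> F) \<or> (y = v \<and> x \<in> F))"
  define Fs' where "Fs' = (Fs - {F}) \<union> {insert v (F - {u}) | u. u \<in> F}"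
  note I' = I[unfolded inv4_def]
  note fin = I'[THEN conjunct1]
  note symA = I'[THEN conjunct2, THEN conjunct1]
  note irrA = I'[THEN conjunct2, THEN conjunct2, THEN conjunct1]
  note inVA = I'[THEN conjunct2, THEN conjunct2, THEN conjunct2, THEN conjunct1]
  note facA = I'[THEN conjunct2, THEN conjunct2, THEN conjunct2, THEN conjunct2, THEN conjunct1]
  note inVA = I'[THEN conjunct2, THEN conjunct2, THEN conjunct2, THEN conjunct1]
  note c4A = I'[THEN conjunct2, THEN conjunct2, THEN conjunct2, THEN conjunct2, THEN conjunct2, THEN conjunct1]
  note triA = I'[THEN conjunct2, THEN conjunct2, THEN conjunct2, THEN conjunct2, THEN conjunct2, THEN conjunct2]
  have sym: "\<And>x y. E x y \<Longrightarrow> E y x" using symA by blast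
  have irr: "\<And>x. \<not> E x x" using irrA by blast
  have inV: "\<And>x y. E x y \<Longrightarrow> x \<in> V \<and> y \<in> V" using inVA by blast
  have fac: "\<And>G. G \<in> Fs \<Longrightarrow> G \<subseteq> V \<and> card G = 4 \<and> clq E G" using facA by blast
  have c4: "\<And>a b c d. E a c \<Longrightarrow> E c b \<Longrightarrow> E b d \<Longrightarrow> E d a \<Longrightarrow> a \<noteq> b \<Longrightarrow> c \<noteq> d \<Longrightarrow> E a b \<or> E c d"
    using c4A by blast
  have FV: "F \<subseteq> V" and cF: "card F = 4" and clF: "clq E F" using fac[OF FF] by auto
  have finF: "finite F" using FV fin finite_subset by blast
  have vF: "v \<notin> F" using FV vV by blast
  have Ev: "\<And>x. \<not> E v x" "\<And>x. \<not> E x v" using inV vV by blast+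
  have E'old: "\<And>x y. x \<noteq> v \<Longrightarrow> y \<noteq> v \<Longrightarrow> E' x y = E x y" unfolding E'_def by auto
  have E'v: "\<And>x. E' v x = (x \<in> F)" "\<And>x. E' x v = (x \<in> F)" unfolding E'_def using Ev vF by auto
  have irr': "\<And>x. \<not> E' x x" unfolding E'_def using irr vF by auto
  have sym': "\<And>x y. E' x y \<Longrightarrow> E' y x" unfolding E'_def using sym by auto
  have clq': "\<And>S. clq E S \<Longrightarrow> clq E' S" unfolding clq_def E'_def by auto
  have p1: "finite (insert v V)" using fin by simp
  have p2: "\<forall>x y. E' x y \<longrightarrow> E' y x" using sym' by blast
  have p3: "\<forall>x. \<not> E' x x" using irr' by blast
  have p4: "\<forall>x y. E' x y \<longrightarrow> x \<in> insert v V \<and> y \<in> insert v V"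
    using inV FV unfolding E'_def by auto
  have part2: "\<forall>G\<in>Fs'. G \<subseteq> insert v V \<and> card G = 4 \<and> clq E' G"
  proof
    fix G assume "G \<in> Fs'"
    then consider "G \<in> Fs" | u where "u \<in> F" "G = insert v (F - {u})" unfolding Fs'_def by blast
    then show "G \<subseteq> insert v V \<and> card G = 4 \<and> clq E' G"
    proof cases
      case 1 then show ?thesis using fac clq' by blast
    next
      case (2 u)
      have "card (F - {u}) = 3" using 2 cF finF by simp
      then have "card G = 4" using 2 vF finF by simp
      moreover have "clq E' G" using 2 clF E'v vF unfolding clq_def by (auto simp: E'_def)
      ultimately show ?thesis using 2 FV by blast
    qed
  qed
  have part3: "\<forall>a b c d. E' a c \<and> E' c b \<and> E' b d \<and> E' d a \<and> a \<noteq> b \<and> c \<noteq> d \<longrightarrow> E' a b \<or> E' c d"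
  proof (intro allI impI)
    fix a b c d assume H: "E' a c \<and> E' c b \<and> E' b d \<and> E' d a \<and> a \<noteq> b \<and> c \<noteq> d"
    show "E' a b \<or> E' c d"
    proof (cases "v \<in> {a, b, c, d}")
      case True
      then consider "v = a" | "v = b" | "v = c" | "v = d" by blast
      then show ?thesis
      proof cases
        assume "v = a" then have "c \<in> F" "d \<in> F" using H E'v by auto
        then show ?thesis using H clF clq' unfolding clq_def by blast
      next
        assume "v = b" then have "c \<in> F" "d \<in> F" using H E'v by auto
        then show ?thesis using H clF clq' unfolding clq_def by blast
      next
        assume "v = c" then have "a \<in> F" "b \<in> F" using H E'v by auto
        then show ?thesis using H clF clq' unfolding clq_def by blast
      next
        assume "v = d" then have "a \<in> F" "b \<in> F" using H E'v by auto
        then show ?thesis using H clF clq' unfolding clq_def by blast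
      qed
    next
      case False
      then have "E a c \<and> E c b \<and> E b d \<and> E d a" using H E'old by auto
      then have "E a b \<or> E c d" using c4 H by blast
      then show ?thesis using False E'old by auto
    qed
  qed
  have part4: "\<forall>T. T \<subseteq> insert v V \<and> card T = 3 \<and> clq E' T \<longrightarrow>
        (\<exists>xs. prep E' xs \<and> 2 \<le> length xs \<and> set xs = NB E' T \<and>
          (\<forall>G\<in>Fs'. T \<subseteq> G \<longrightarrow> G = insert (hd xs) T \<or> G = insert (last xs) T))"
  proof (intro allI impI)
    fix T assume HT: "T \<subseteq> insert v V \<and> card T = 3 \<and> clq E' T"
    then have TV': "T \<subseteq> insert v V" and cT: "card T = 3" and clT: "clq E' T" by auto
    have finT: "finite T" using cT card.infinite by fastforce
    show "\<exists>xs. prep E' xs \<and> 2 \<le> length xs \<and> set xs = NB E' T \<and>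
          (\<forall>G\<in>Fs'. T \<subseteq> G \<longrightarrow> G = insert (hd xs) T \<or> G = insert (last xs) T)"
    proof (cases "v \<in> T")
      case True
      define T' where "T' = T - {v}"
      have cT': "card T' = 2" using cT True finT by (simp add: T'_def)
      have T'F: "T' \<subseteq> F"
      proof
        fix t assume "t \<in> T'"
        then have "t \<in> T" "t \<noteq> v" unfolding T'_def by auto
        then have "E' v t" using clT True unfolding clq_def by auto
        then show "t \<in> F" using E'v by simp
      qed
      have "card (F - T') = 2" using cF T'F cT' card_Diff_subset[of T' F] finite_subset[OF T'F finF] by simp
      then obtain c d where cd: "F - T' = {c, d}" "c \<noteq> d" by (auto simp: card_2_iff)
      have TT: "T = insert v T'" using True T'_def by auto
      have FT: "F = T' \<union> {c, d}" "c \<notin> T'" "d \<notin> T'" "c \<in> F" "d \<in> F"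
        using cd T'F by (blast, blast, blast, blast, blast)
      have "E c d" using clF FT(4,5) cd(2) unfolding clq_def by blast
      then have Ecd: "E' c d" "E' d c" using sym unfolding E'_def by auto
      show ?thesis
      proof (intro exI[of _ "[c,d]"] conjI ballI impI)
        show "prep E' [c, d]" using Ecd irr' cd(2) unfolding prep_def by (auto simp: less_Suc_eq nth_Cons')
        show "2 \<le> length [c, d]" by simp
        show "set [c, d] = NB E' T"
        proof
          show "set [c, d] \<subseteq> NB E' T"
          proof
            fix x assume x: "x \<in> set [c, d]"
            then have xF: "x \<in> F" "x \<notin> T'" using FT by auto
            have "E' x t" if "t \<in> T" for t
            proof (cases "t = v")
              case True then show ?thesis using xF E'v by simp
            next
              case False
              then have "t \<in> T'" "t \<in> F" using that T'F T'_def by auto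
              then have "x \<noteq> t" using xF by auto
              then show ?thesis using clF clq' xF \<open>t \<in> F\<close> unfolding clq_def by blast
            qed
            then show "x \<in> NB E' T" unfolding NB_def by blast
          qed
          show "NB E' T \<subseteq> set [c, d]"
          proof
            fix x assume "x \<in> NB E' T"
            then have x: "\<And>t. t \<in> T \<Longrightarrow> E' x t" unfolding NB_def by blast
            have "x \<in> F" using x[OF True] E'v by simp
            moreover have "x \<notin> T'" using x irr' TT by blast
            ultimately show "x \<in> set [c, d]" using cd by auto
          qed
        qed
        fix G assume G: "G \<in> Fs'" "T \<subseteq> G"
        then consider "G \<in> Fs" | u where "u \<in> F" "G = insert v (F - {u})" unfolding Fs'_def by blast
        then show "G = insert (hd [c, d]) T \<or> G = insert (last [c, d]) T"
        proof cases
          case 1 then have "G \<subseteq> V" using fac by blast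
          then show ?thesis using G True vV by blast
        next
          case (2 u)
          then have "u \<notin> T'" using G TT vF by blast
          then have "u \<in> F - T'" using 2 by blast
          then have "u = c \<or> u = d" using cd(1) by blast
          then show ?thesis using 2 FT TT cd(2) by auto
        qed
      qed
    next
      case False
      have TV: "T \<subseteq> V" using TV' False by blast
      have clTE: "clq E T" unfolding clq_def
      proof (intro ballI impI)
        fix x y assume "x \<in> T" "y \<in> T" "x \<noteq> y"
        then have "E' x y" "x \<noteq> v" "y \<noteq> v" using clT False unfolding clq_def by auto
        then show "E x y" using E'old by simp
      qed
      obtain xs where xs: "prep E xs" "2 \<le> length xs" "set xs = NB E T"
        and fxs: "\<forall>G\<in>Fs. T \<subseteq> G \<longrightarrow> G = insert (hd xs) T \<or> G = insert (last xs) T"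
        using triA[rule_format, of T] TV cT clTE by blast
      have Tne: "T \<noteq> {}" using cT by auto
      have xsV: "set xs \<subseteq> V" using xs(3) Tne inV unfolding NB_def by blast
      have xsT: "\<And>x. x \<in> set xs \<Longrightarrow> x \<notin> T" using xs(3) irr unfolding NB_def by blast
      have vxs: "v \<notin> set xs" using xsV vV by blast
      have xne: "xs \<noteq> []" using xs(2) by auto
      have E'xs: "\<forall>x\<in>set xs. \<forall>y\<in>set xs. E' x y = E x y"
      proof (intro ballI)
        fix x y assume "x \<in> set xs" "y \<in> set xs"
        then have "x \<noteq> v" "y \<noteq> v" using vxs by auto
        then show "E' x y = E x y" using E'old by simp
      qed
      show ?thesis
      proof (cases "T \<subseteq> F")
        case True
        have "card (F - T) = 1" using cF True cT card_Diff_subset[of T F] finite_subset[OF True finF] by simp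
        then obtain w where w: "F - T = {w}" by (rule card_1_singletonE)
        have Fw: "F = insert w T" "w \<notin> T" using w True by auto
        have "w = hd xs \<or> w = last xs"
        proof -
          have "hd xs \<notin> T" "last xs \<notin> T" using xsT xne by auto
          moreover have "insert w T = insert (hd xs) T \<or> insert w T = insert (last xs) T"
          proof -
            have "F = insert (hd xs) T \<or> F = insert (last xs) T" using fxs FF True by blast
            then show ?thesis using Fw(1) by simp
          qed
          ultimately show ?thesis using Fw(2) by blast
        qed
        then obtain ys where ys: "prep E ys" "set ys = set xs" "length ys = length xs" "hd ys = w"
          "{hd ys, last ys} = {hd xs, last xs}"
        proof
          assume "w = hd xs" then show ?thesis using that[of xs] xs by auto
        next
          assume "w = last xs" then show ?thesis using that[of "rev xs"] xs prep_rev[OF xs(1) symA] xne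
            by (auto simp: hd_rev last_rev)
        qed
        have yne: "ys \<noteq> []" using ys(3) xne by auto
        show ?thesis
        proof (intro exI[of _ "v # ys"] conjI ballI impI)
          have "\<forall>x\<in>set ys. E' v x \<longleftrightarrow> x = hd ys" using E'v Fw ys xsT by auto
          moreover have "\<forall>x\<in>set ys. E' x v \<longleftrightarrow> x = hd ys" using E'v Fw ys xsT by auto
          ultimately show "prep E' (v # ys)" using prep_cons[OF ys(1) yne] vxs ys(2) irr' E'xs by auto
          show "2 \<le> length (v # ys)" using ys(3) xs(2) by simp
          show "set (v # ys) = NB E' T"
          proof -
            have "NB E' T = insert v (NB E T)"
            proof
              show "NB E' T \<subseteq> insert v (NB E T)"
              proof
                fix x assume x: "x \<in> NB E' T"
                show "x \<in> insert v (NB E T)"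
                proof (cases "x = v")
                  case False
                  have "x \<in> NB E T" unfolding NB_def
                  proof (intro CollectI ballI)
                    fix t assume "t \<in> T"
                    then have "t \<noteq> v" "E' x t" using TV vV x unfolding NB_def by auto
                    then show "E x t" using E'old False by simp
                  qed
                  then show ?thesis by simp
                qed simp
              qed
              have "v \<in> NB E' T" using E'v(1) True unfolding NB_def by blast
              moreover have "NB E T \<subseteq> NB E' T" unfolding NB_def E'_def by blast
              ultimately show "insert v (NB E T) \<subseteq> NB E' T" by blast
            qed
            then show ?thesis using ys(2) xs(3) by simp
          qed
          fix G assume G: "G \<in> Fs'" "T \<subseteq> G"
          then consider "G \<in> Fs" "G \<noteq> F" | u where "u \<in> F" "G = insert v (F - {u})" unfolding Fs'_def by blast
          then show "G = insert (hd (v # ys)) T \<or> G = insert (last (v # ys)) T"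
          proof cases
            case 1
            then have "G = insert (hd xs) T \<or> G = insert (last xs) T" using fxs G by blast
            then have "G = insert (hd ys) T \<or> G = insert (last ys) T" 
            proof -
              have "hd xs \<in> {hd ys, last ys}" "last xs \<in> {hd ys, last ys}" using ys(5) by auto
              then show ?thesis using \<open>G = insert (hd xs) T \<or> G = insert (last xs) T\<close> by auto
            qed
            then show ?thesis using 1 Fw ys(4) yne by auto
          next
            case (2 u)
            then have "T \<subseteq> F - {u}" using G False by blast
            then have "u = w" using 2 Fw by blast
            then show ?thesis using 2 Fw by auto
          qed
        qed
      next
        case False
        then obtain t0 where t0: "t0 \<in> T" "t0 \<notin> F" by blast
        show ?thesis
        proof (intro exI[of _ xs] conjI ballI impI)
          show "prep E' xs" using prep_transfer[OF xs(1) E'xs] .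
          show "2 \<le> length xs" by (rule xs(2))
          show "set xs = NB E' T"
          proof -
            have "NB E' T = NB E T"
            proof
              show "NB E' T \<subseteq> NB E T"
              proof
                fix x assume x: "x \<in> NB E' T"
                then have "x \<noteq> v" using t0 E'v unfolding NB_def by blast
                show "x \<in> NB E T" unfolding NB_def
                proof (intro CollectI ballI)
                  fix t assume "t \<in> T"
                  then have "t \<noteq> v" "E' x t" using TV vV x unfolding NB_def by auto
                  then show "E x t" using E'old \<open>x \<noteq> v\<close> by simp
                qed
              qed
              show "NB E T \<subseteq> NB E' T" using E'_def unfolding NB_def by auto
            qed
            then show ?thesis using xs(3) by simp
          qed
          fix G assume G: "G \<in> Fs'" "T \<subseteq> G"
          then consider "G \<in> Fs" | u where "u \<in> F" "G = insert v (F - {u})" unfolding Fs'_def by blast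
          then show "G = insert (hd xs) T \<or> G = insert (last xs) T"
          proof cases
            case 1 then show ?thesis using fxs G by blast
          next
            case (2 u)
            then have "T \<subseteq> F" using G \<open>v \<notin> T\<close> by blast
            then show ?thesis using False by blast
          qed
        qed
      qed
    qed
  qed
  have "inv4 (insert v V) E' Fs'" unfolding inv4_def by (intro conjI p1 p2 p3 p4 part2 part3 part4)
  then show ?thesis unfolding E'_def Fs'_def .
qed



lemma stacked_inv: "stacked4 V E Fs \<Longrightarrow> inv4 V E Fs"
proof (induction rule: stacked4.induct)
  case (simplex S) then show ?case by (rule inv_simplex)
next
  case (stack V E Fs F v) then show ?case by (intro inv_stack) auto
qed

theorem lemma4p6:
  fixes V :: "'a set" and E :: "'a \<Rightarrow> 'a \<Rightarrow> bool"
  assumes "stacked4_graph V E"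
    and "\<exists>(V3 :: nat set) E3 (V6 :: nat set) E6.
           simple_graph V3 E3 \<and> card V3 = 3 \<and> simple_graph V6 E6 \<and> card V6 = 6 \<and>
           has_induced V E (join_V V3 V6) (join_E V3 E3 V6 E6)"
  shows "has_induced V E (join_V K3_V P6_V) (join_E K3_V K3_E P6_V P6_E)"
proof -
  obtain Fs where "stacked4 V E Fs" using assms(1) unfolding stacked4_graph_def by blast
  then have I: "inv4 V E Fs" by (rule stacked_inv)
  note I' = I[unfolded inv4_def]
  note symA = I'[THEN conjunct2, THEN conjunct1]
  note irrA = I'[THEN conjunct2, THEN conjunct2, THEN conjunct1]
  note inVA = I'[THEN conjunct2, THEN conjunct2, THEN conjunct2, THEN conjunct1]
  note c4A = I'[THEN conjunct2, THEN conjunct2, THEN conjunct2, THEN conjunct2, THEN conjunct2, THEN conjunct1]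
  note triA = I'[THEN conjunct2, THEN conjunct2, THEN conjunct2, THEN conjunct2, THEN conjunct2, THEN conjunct2]
  have sym: "\<And>x y. E x y \<Longrightarrow> E y x" using symA by blast
  have irr: "\<And>x. \<not> E x x" using irrA by blast
  obtain V3 :: "nat set" and E3 and V6 :: "nat set" and E6 where
    c3: "card V3 = 3" and c6: "card V6 = 6" and hi: "has_induced V E (join_V V3 V6) (join_E V3 E3 V6 E6)"
    using assms(2) by blast
  obtain f where inj: "inj_on f (join_V V3 V6)" and img: "f ` join_V V3 V6 \<subseteq> V"
    and adj: "\<forall>x\<in>join_V V3 V6. \<forall>y\<in>join_V V3 V6. join_E V3 E3 V6 E6 x y \<longleftrightarrow> E (f x) (f y)"
    using hi unfolding has_induced_def by blast
  have "finite V3" using c3 card.infinite by fastforce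
  then obtain l3 where l3: "set l3 = V3" "distinct l3" using finite_distinct_list by blast
  have len3: "length l3 = 3" using l3 c3 distinct_card by fastforce
  have "finite V6" using c6 card.infinite by fastforce
  then obtain l6 where l6: "set l6 = V6" "distinct l6" using finite_distinct_list by blast
  have len6: "length l6 = 6" using l6 c6 distinct_card by fastforce
  define a where "a i = f (Inl (l3 ! i))" for i
  define b where "b j = f (Inr (l6 ! j))" for j
  have inW3: "\<And>i. i < 3 \<Longrightarrow> Inl (l3 ! i) \<in> join_V V3 V6" using l3 len3 unfolding join_V_def by auto
  have inW6: "\<And>j. j < 6 \<Longrightarrow> Inr (l6 ! j) \<in> join_V V3 V6" using l6 len6 unfolding join_V_def by auto
  have aV: "\<And>i. i < 3 \<Longrightarrow> a i \<in> V" using img inW3 unfolding a_def by blast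
  have bV: "\<And>j. j < 6 \<Longrightarrow> b j \<in> V" using img inW6 unfolding b_def by blast
  have ainj: "\<And>i j. i < 3 \<Longrightarrow> j < 3 \<Longrightarrow> a i = a j \<Longrightarrow> i = j"
  proof -
    fix i j assume ij: "i < (3::nat)" "j < 3" "a i = a j"
    then have "Inl (l3 ! i) = (Inl (l3 ! j) :: nat + nat)" using inj inW3 unfolding a_def inj_on_def by blast
    then show "i = j" using l3(2) len3 ij by (simp add: nth_eq_iff_index_eq)
  qed
  have binj: "\<And>i j. i < 6 \<Longrightarrow> j < 6 \<Longrightarrow> b i = b j \<Longrightarrow> i = j"
  proof -
    fix i j assume ij: "i < (6::nat)" "j < 6" "b i = b j"
    then have "Inr (l6 ! i) = (Inr (l6 ! j) :: nat + nat)" using inj inW6 unfolding b_def inj_on_def by blast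
    then show "i = j" using l6(2) len6 ij by (simp add: nth_eq_iff_index_eq)
  qed
  have ab: "\<And>i j. i < 3 \<Longrightarrow> j < 6 \<Longrightarrow> E (a i) (b j)"
  proof -
    fix i j :: nat assume ij: "i < 3" "j < 6"
    have "join_E V3 E3 V6 E6 (Inl (l3 ! i)) (Inr (l6 ! j))" using l3 l6 len3 len6 ij by auto
    then show "E (a i) (b j)" using adj inW3 inW6 ij unfolding a_def b_def by blast
  qed
  have ba: "\<And>i j. i < 3 \<Longrightarrow> j < 6 \<Longrightarrow> E (b j) (a i)" using ab sym by blast
  show ?thesis
  proof (cases "\<forall>i<3. \<forall>j<3. i \<noteq> j \<longrightarrow> E (a i) (a j)")
    case True
    define T where "T = {a 0, a 1, a 2}"
    have "a 0 \<noteq> a 1" "a 0 \<noteq> a 2" "a 1 \<noteq> a 2" using ainj[of 0 1] ainj[of 0 2] ainj[of 1 2] by auto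
    then have cT: "card T = 3" unfolding T_def card_3_iff by blast
    have TV: "T \<subseteq> V" unfolding T_def using aV by auto
    have clT: "clq E T" unfolding T_def clq_def using True by auto
    obtain xs where xs: "prep E xs" "2 \<le> length xs" "set xs = NB E T"
      using triA[rule_format, of T] TV cT clT by blast
    have bxs: "b ` {0..<6} \<subseteq> set xs"
    proof
      fix y assume "y \<in> b ` {0..<6}"
      then obtain j where j: "j < 6" "y = b j" by auto
      have "E y t" if "t \<in> T" for t using that ba j unfolding T_def by auto
      then show "y \<in> set xs" using xs(3) unfolding NB_def by blast
    qed
    have "inj_on b {0..<6}" using binj unfolding inj_on_def by auto
    then have "card (b ` {0..<6}) = 6" by (simp add: card_image)
    then have "6 \<le> card (set xs)" using bxs card_mono by (metis List.finite_set)
    then have lxs: "6 \<le> length xs" using card_length order_trans by blast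
    have dxs: "distinct xs" using xs(1) unfolding prep_def by blast
    have xsE: "\<And>i j. i < length xs \<Longrightarrow> j < length xs \<Longrightarrow> E (xs!i) (xs!j) = (j = Suc i \<or> i = Suc j)"
      using xs(1) unfolding prep_def by blast
    have xsT: "\<And>j t. j < length xs \<Longrightarrow> t \<in> T \<Longrightarrow> E (xs!j) t"
      using xs(3) unfolding NB_def by (metis (mono_tags, lifting) mem_Collect_eq nth_mem)
    have aT: "\<And>i. i < 3 \<Longrightarrow> a i \<in> T"
    proof -
      fix i :: nat assume "i < 3"
      then have "i = 0 \<or> i = 1 \<or> i = 2" by auto
      then show "a i \<in> T" unfolding T_def by auto
    qed
    define g where "g = case_sum a (\<lambda>j. xs ! j)"
    show ?thesis unfolding has_induced_def
    proof (intro exI[of _ g] conjI ballI)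
      show "inj_on g (join_V K3_V P6_V)"
      proof (rule inj_onI)
        fix x y assume x: "x \<in> join_V K3_V P6_V" and y: "y \<in> join_V K3_V P6_V" and gxy: "g x = g y"
        show "x = y"
        proof (cases x; cases y)
          fix i j assume xy: "x = Inl i" "y = Inl j"
          then have "i < 3" "j < 3" "a i = a j" using x y gxy unfolding g_def join_V_def K3_V_def by auto
          then show "x = y" using ainj xy by blast
        next
          fix i j assume "x = Inl i" "y = Inr j"
          then have "i < 3" "j < length xs" "a i = xs ! j" using x y gxy lxs unfolding g_def join_V_def K3_V_def P6_V_def by auto
          then show "x = y" using xsT[of j "a i"] aT irr by metis
        next
          fix i j assume "x = Inr i" "y = Inl j"
          then have "j < 3" "i < length xs" "a j = xs ! i" using x y gxy lxs unfolding g_def join_V_def K3_V_def P6_V_def by auto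
          then show "x = y" using xsT[of i "a j"] aT irr by metis
        next
          fix i j assume "x = Inr i" "y = Inr j"
          then show "x = y" using x y gxy dxs lxs unfolding g_def join_V_def P6_V_def
            by (auto simp: nth_eq_iff_index_eq)
        qed
      qed
      show "g ` join_V K3_V P6_V \<subseteq> V"
      proof
        fix z assume "z \<in> g ` join_V K3_V P6_V"
        then obtain x where x: "x \<in> join_V K3_V P6_V" "z = g x" by blast
        show "z \<in> V"
        proof (cases x)
          case (Inl i) then show ?thesis using x aV unfolding g_def join_V_def K3_V_def by auto
        next
          case (Inr j)
          then have "j < length xs" using x lxs unfolding join_V_def P6_V_def by auto
          then have "z \<in> set xs" using x Inr unfolding g_def by simp
          moreover have "a 0 \<in> T" using aT by simp
          ultimately have "E z (a 0)" using xs(3) unfolding NB_def by blast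
          then show ?thesis using inVA by blast
        qed
      qed
      fix x y assume x: "x \<in> join_V K3_V P6_V" and y: "y \<in> join_V K3_V P6_V"
      show "join_E K3_V K3_E P6_V P6_E x y = E (g x) (g y)"
      proof (cases x; cases y)
        fix i j assume "x = Inl i" "y = Inl j"
        then have ij: "i < 3" "j < 3" "x = Inl i" "y = Inl j" using x y unfolding join_V_def K3_V_def by auto
        show ?thesis using ij True irr unfolding g_def K3_E_def K3_V_def by auto
      next
        fix i j assume "x = Inl i" "y = Inr j"
        then have ij: "i < 3" "j < 6" "x = Inl i" "y = Inr j" using x y unfolding join_V_def K3_V_def P6_V_def by auto
        have "E (xs ! j) (a i)" using xsT aT ij lxs by auto
        then show ?thesis using ij sym unfolding g_def K3_V_def P6_V_def by auto
      next
        fix i j assume "x = Inr i" "y = Inl j"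
        then have ij: "i < 6" "j < 3" "x = Inr i" "y = Inl j" using x y unfolding join_V_def K3_V_def P6_V_def by auto
        have "E (xs ! i) (a j)" using xsT aT ij lxs by auto
        then show ?thesis using ij unfolding g_def K3_V_def P6_V_def by auto
      next
        fix i j assume "x = Inr i" "y = Inr j"
        then have ij: "i < 6" "j < 6" "x = Inr i" "y = Inr j" using x y unfolding join_V_def P6_V_def by auto
        show ?thesis using ij xsE[of i j] lxs unfolding g_def P6_E_def P6_V_def by auto
      qed
    qed
  next
    case False
    then obtain i j where ij: "i < 3" "j < 3" "i \<noteq> j" "\<not> E (a i) (a j)" by blast
    show ?thesis
    proof (cases "\<forall>p<6. \<forall>q<6. p \<noteq> q \<longrightarrow> E (b p) (b q)")
      case False
      then obtain p q where pq: "p < 6" "q < 6" "p \<noteq> q" "\<not> E (b p) (b q)" by blast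
      have H: "E (a i) (b p)" "E (b p) (a j)" "E (a j) (b q)" "E (b q) (a i)"
        using ab ba ij pq by auto
      have "a i \<noteq> a j" using ainj ij by blast
      moreover have "b p \<noteq> b q" using binj pq by blast
      ultimately have "E (a i) (a j) \<or> E (b p) (b q)"
        using c4A[rule_format, of "a i" "b p" "a j" "b q"] H by simp
      then show ?thesis using ij pq by blast
    next
      case True
      define T where "T = {b 0, b 1, b 2}"
      have "b 0 \<noteq> b 1" "b 0 \<noteq> b 2" "b 1 \<noteq> b 2" using binj[of 0 1] binj[of 0 2] binj[of 1 2] by auto
      then have cT: "card T = 3" unfolding T_def card_3_iff by blast
      have TV: "T \<subseteq> V" unfolding T_def using bV by auto
      have clT: "clq E T" unfolding T_def clq_def using True by auto
      obtain xs where xs: "prep E xs" "set xs = NB E T"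
        using triA[rule_format, of T] TV cT clT by blast
      have "b k \<in> set xs" if "k < 6" "k \<ge> 3" for k
      proof -
        have "k \<noteq> 0" "k \<noteq> 1" "k \<noteq> 2" using that by auto
        then have "E (b k) t" if "t \<in> T" for t using that True \<open>k < 6\<close> unfolding T_def by auto
        then show ?thesis using xs(2) unfolding NB_def by blast
      qed
      then have "b 3 \<in> set xs" "b 4 \<in> set xs" "b 5 \<in> set xs" by auto
      moreover have "E (b 3) (b 4)" "E (b 4) (b 5)" "E (b 3) (b 5)" using True by auto
      ultimately show ?thesis using prep_notri[OF xs(1)] by blast
    qed
  qed
qed

end
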